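(* Let $\mathbb{K}$ be an algebraically closed field of characteristic $2$, $n\geq2$, $\mathfrak{g}=\mathfrak{vect}^{(1)}(1;\underline{n})$, and let $u\in\mathcal{O}(1;\underline{n})$ be a linear combination of the elements $x^{(2j)}$ with $j\geq1$ (i.e. $u$ has only even divided powers and zero constant term). Then the even part of the Lie superalgebra $S(\mathfrak{g}^{<1>})$ associated with the $\mathbb{Z}/2$-grading of $\mathfrak{g}$ defined by $D_u=(u+x+xu\,\partial^2u)\partial$ is a solvable Lie algebra.
   Context: $\mathcal{O}(1;\underline{n})$ is the divided power algebra with basis $x^{(r)}$, $0\leq r<2^n$, $x^{(r)}x^{(s)}=\binom{r+s}{r}x^{(r+s)}$ (zero if $r+s\geq2^n$), $\partial x^{(k)}=x^{(k-1)}$. $\mathfrak{vect}(1;\underline{n})=\{f\partial\}$ with commutator bracket; $\mathfrak{g}=\mathfrak{vect}^{(1)}(1;\underline{n})$ is its derived algebra. The operator $U:X\mapsto[D_u,X]$ maps $\mathfrak{g}$ to itself with $U^2=U$; the grading it defines is $\mathfrak{g}_{\bar1}=\mathrm{Im}\,U$, $\mathfrak{g}_{\bar0}=\mathrm{Ker}\,U$. For this grading, $\mathfrak{g}^{<1>}$ is the smallest Lie subalgebra of $\mathrm{Der}\,\mathfrak{g}$ containing $\mathrm{ad}\,\mathfrak{g}$ and all $(\mathrm{ad}_y)^2$, $y\in\mathfrak{g}_{\bar1}$; its even part (derivations preserving $\mathfrak{g}_{\bar0}$ and $\mathfrak{g}_{\bar1}$) is the even part of $S(\mathfrak{g}^{<1>})$,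 the Lie superalgebra on $\mathfrak{g}^{<1>}$ with odd part $\mathfrak{g}_{\bar1}$ and squaring $y\mapsto(\mathrm{ad}_y)^2$. *)

theory Defs
  imports "HOL-Computational_Algebra.Polynomial"
begin

text \<open>Divided power algebra O(1;n): an element is represented by its coefficient
  function f, where f r is the coefficient of x^(r); elements of O(1;n) are those
  with f r = 0 for r \<ge> 2^n.  A vector field f\<partial> is represented by f.\<close>

definition dpO :: "nat \<Rightarrow> (nat \<Rightarrow> 'a::field) set" where
  "dpO n = {f. \<forall>r\<ge>2^n. f r = 0}"

definition dp_mult :: "nat \<Rightarrow> (nat \<Rightarrow> 'a::field) \<Rightarrow> (nat \<Rightarrow> 'a) \<Rightarrow> nat \<Rightarrow> 'a" where
  "dp_mult n f g = (\<lambda>k. if k < 2^n then (\<Sum>r\<le>k. of_nat (k choose r) * f r * g (k - r)) else 0)"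

definition dp_deriv :: "nat \<Rightarrow> (nat \<Rightarrow> 'a::field) \<Rightarrow> nat \<Rightarrow> 'a" where
  "dp_deriv n f = (\<lambda>k. if k + 1 < 2^n then f (k + 1) else 0)"

definition dp_x :: "nat \<Rightarrow> 'a::field" where
  "dp_x = (\<lambda>k. if k = 1 then 1 else 0)"

definition vect :: "nat \<Rightarrow> (nat \<Rightarrow> 'a::field) set" where
  "vect n = dpO n"

definition vbr :: "nat \<Rightarrow> (nat \<Rightarrow> 'a::field) \<Rightarrow> (nat \<Rightarrow> 'a) \<Rightarrow> nat \<Rightarrow> 'a" where
  "vbr n f g = (\<lambda>k. dp_mult n f (dp_deriv n g) k - dp_mult n g (dp_deriv n f) k)"

inductive_set lin_span :: "('b \<Rightarrow> 'a::field) set \<Rightarrow> ('b \<Rightarrow> 'a) set" for S where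
  zero: "(\<lambda>_. 0) \<in> lin_span S"
| base: "v \<in> S \<Longrightarrow> v \<in> lin_span S"
| add: "v \<in> lin_span S \<Longrightarrow> w \<in> lin_span S \<Longrightarrow> (\<lambda>k. v k + w k) \<in> lin_span S"
| smult: "v \<in> lin_span S \<Longrightarrow> (\<lambda>k. c * v k) \<in> lin_span S"

definition vect1 :: "nat \<Rightarrow> (nat \<Rightarrow> 'a::field) set" where
  "vect1 n = lin_span {vbr n f g | f g. f \<in> vect n \<and> g \<in> vect n}"

definition D_u :: "nat \<Rightarrow> (nat \<Rightarrow> 'a::field) \<Rightarrow> nat \<Rightarrow> 'a" where
  "D_u n u = (\<lambda>k. u k + dp_x k +
     dp_mult n dp_x (dp_mult n u (dp_deriv n (dp_deriv n u))) k)"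

text \<open>The grading defined by U = ad D_u on g: g_1 = Im U, g_0 = Ker U.\<close>
definition gr_odd :: "nat \<Rightarrow> (nat \<Rightarrow> 'a::field) \<Rightarrow> (nat \<Rightarrow> 'a) set" where
  "gr_odd n u = {vbr n (D_u n u) X | X. X \<in> vect1 n}"

definition gr_even :: "nat \<Rightarrow> (nat \<Rightarrow> 'a::field) \<Rightarrow> (nat \<Rightarrow> 'a) set" where
  "gr_even n u = {X \<in> vect1 n. vbr n (D_u n u) X = (\<lambda>_. 0)}"

text \<open>Endomorphisms of g are represented as maps on coefficient functions that
  vanish outside g (so that equality of functions is equality of endomorphisms).\<close>
type_synonym 'a endo = "(nat \<Rightarrow> 'a) \<Rightarrow> nat \<Rightarrow> 'a"

definition endo_zero :: "'a::field endo" where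
  "endo_zero = (\<lambda>X k. 0)"

definition endo_comp :: "'a::field endo \<Rightarrow> 'a endo \<Rightarrow> 'a endo" where
  "endo_comp D E = (\<lambda>X. D (E X))"

definition endo_br :: "'a::field endo \<Rightarrow> 'a endo \<Rightarrow> 'a endo" where
  "endo_br D E = (\<lambda>X k. D (E X) k - E (D X) k)"

definition Der :: "nat \<Rightarrow> 'a::field endo set" where
  "Der n = {D. (\<forall>X. X \<notin> vect1 n \<longrightarrow> D X = (\<lambda>_. 0))
      \<and> (\<forall>X\<in>vect1 n. D X \<in> vect1 n)
      \<and> (\<forall>X\<in>vect1 n. \<forall>Y\<in>vect1 n. D (\<lambda>k. X k + Y k) = (\<lambda>k. D X k + D Y k))
      \<and> (\<forall>X\<in>vect1 n. \<forall>c. D (\<lambda>k. c * X k) = (\<lambda>k. c * D X k))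
      \<and> (\<forall>X\<in>vect1 n. \<forall>Y\<in>vect1 n.
            D (vbr n X Y) = (\<lambda>k. vbr n (D X) Y k + vbr n X (D Y) k))}"

definition ad_g :: "nat \<Rightarrow> (nat \<Rightarrow> 'a::field) \<Rightarrow> 'a endo" where
  "ad_g n X = (\<lambda>Y. if Y \<in> vect1 n then vbr n X Y else (\<lambda>_. 0))"

definition lie_subalg :: "'a::field endo set \<Rightarrow> bool" where
  "lie_subalg L \<longleftrightarrow> endo_zero \<in> L
     \<and> (\<forall>D\<in>L. \<forall>E\<in>L. (\<lambda>X k. D X k + E X k) \<in> L)
     \<and> (\<forall>D\<in>L. \<forall>c. (\<lambda>X k. c * D X k) \<in> L)
     \<and> (\<forall>D\<in>L. \<forall>E\<in>L. endo_br D E \<in> L)"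

definition g_sq :: "nat \<Rightarrow> (nat \<Rightarrow> 'a::field) \<Rightarrow> 'a endo set" where
  "g_sq n u = \<Inter>{L. L \<subseteq> Der n \<and> lie_subalg L
       \<and> (\<forall>X\<in>vect1 n. ad_g n X \<in> L)
       \<and> (\<forall>y\<in>gr_odd n u. endo_comp (ad_g n y) (ad_g n y) \<in> L)}"

text \<open>Even part of S(g^<1>): the elements of g^<1> preserving g_0 and g_1.\<close>
definition S_even :: "nat \<Rightarrow> (nat \<Rightarrow> 'a::field) \<Rightarrow> 'a endo set" where
  "S_even n u = {D \<in> g_sq n u. (\<forall>X\<in>gr_even n u. D X \<in> gr_even n u)
                              \<and> (\<forall>X\<in>gr_odd n u. D X \<in> gr_odd n u)}"

inductive_set endo_span :: "'a::field endo set \<Rightarrow> 'a endo set" for S where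
  zero: "endo_zero \<in> endo_span S"
| base: "D \<in> S \<Longrightarrow> D \<in> endo_span S"
| add: "D \<in> endo_span S \<Longrightarrow> E \<in> endo_span S \<Longrightarrow> (\<lambda>X k. D X k + E X k) \<in> endo_span S"
| smult: "D \<in> endo_span S \<Longrightarrow> (\<lambda>X k. c * D X k) \<in> endo_span S"

fun derived_series :: "'a::field endo set \<Rightarrow> nat \<Rightarrow> 'a endo set" where
  "derived_series L 0 = L"
| "derived_series L (Suc m) =
     endo_span {endo_br D E | D E. D \<in> derived_series L m \<and> E \<in> derived_series L m}"

definition solvable_lie :: "'a::field endo set \<Rightarrow> bool" where
  "solvable_lie L \<longleftrightarrow> (\<exists>m. derived_series L m = {endo_zero})"

end

theory Submission
  imports Defs
begin

definition sm :: "(nat \<Rightarrow> 'a::field) \<Rightarrow> (nat \<Rightarrow> 'a) \<Rightarrow> nat \<Rightarrow> 'a" where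
  "sm f g k = (\<Sum>r\<le>k. of_nat (k choose r) * f r * g (k - r))"

lemma sm_comm: "sm f g k = sm g f k"
  unfolding sm_def
  apply (rule sum.reindex_bij_witness[where i="\<lambda>r. k - r" and j="\<lambda>r. k - r"])
  apply (auto simp: binomial_symmetric[symmetric])
  done

lemma sm_assoc_aux: "sm (sm f g) h k = sm f (sm g h) k"
proof -
  define G where "G i j = of_nat (k choose (i+j)) * of_nat ((i+j) choose i) * f i * g j * h (k - (i+j))" for i j
  have "sm (sm f g) h k = (\<Sum>r\<le>k. \<Sum>i\<le>r. G i (r - i))"
    unfolding sm_def G_def
    by (auto simp: sum_distrib_left sum_distrib_right mult_ac intro!: sum.cong)
  also have "\<dots> = (\<Sum>(i,j)\<in>{(i,j). i+j \<le> k}. G i j)"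
    by (rule sum.triangle_reindex_eq[symmetric])
  also have "{(i,j). i+j \<le> k} = Sigma {..k} (\<lambda>i. {..k-i})" by auto
  also have "(\<Sum>(i,j)\<in>Sigma {..k} (\<lambda>i. {..k-i}). G i j) = (\<Sum>i\<le>k. \<Sum>j\<le>k-i. G i j)"
    by (subst sum.Sigma) auto
  also have "\<dots> = sm f (sm g h) k"
  proof -
    have pw: "G i j = of_nat (k choose i) * f i * (of_nat (k - i choose j) * g j * h (k - i - j))"
      if "i \<le> k" "j \<le> k - i" for i j
    proof -
      have "(k choose (i+j)) * ((i+j) choose i) = (k choose i) * ((k-i) choose j)"
        using choose_mult[of i "i+j" k] that by simp
      then have e: "(of_nat (k choose (i+j)) * of_nat ((i+j) choose i) :: 'a) = of_nat (k choose i) * of_nat ((k-i) choose j)"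
        by (metis of_nat_mult)
      have "G i j = (of_nat (k choose (i + j)) * of_nat (i + j choose i)) * (f i * g j * h (k - (i + j)))"
        unfolding G_def by (simp add: mult_ac)
      also have "\<dots> = (of_nat (k choose i) * of_nat ((k-i) choose j)) * (f i * g j * h (k - (i + j)))"
        by (simp only: e)
      finally show ?thesis by (simp add: mult_ac diff_diff_left)
    qed
    show ?thesis unfolding sm_def
      by (auto simp: sum_distrib_left pw intro!: sum.cong)
  qed
  finally show ?thesis .
qed

lemma sm_Suc: "sm f g (Suc k) = sm (\<lambda>r. f (Suc r)) g k + sm f (\<lambda>r. g (Suc r)) k"
proof -
  have 1: "sm f g (Suc k) = f 0 * g (Suc k) + (\<Sum>r\<le>k. of_nat (k choose r) * f (Suc r) * g (k - r))
      + (\<Sum>r\<le>k. of_nat (k choose Suc r) * f (Suc r) * g (k - r))"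
    unfolding sm_def by (simp add: sum.atMost_Suc_shift sum.distrib algebra_simps del: sum.atMost_Suc)
  have 2: "sm f (\<lambda>r. g (Suc r)) k = (\<Sum>r\<le>Suc k. of_nat (k choose r) * f r * g (Suc k - r))"
    unfolding sm_def by (simp add: Suc_diff_le binomial_eq_0)
  also have "\<dots> = f 0 * g (Suc k) + (\<Sum>r\<le>k. of_nat (k choose Suc r) * f (Suc r) * g (k - r))"
    by (simp add: sum.atMost_Suc_shift del: sum.atMost_Suc)
  finally show ?thesis using 1 by (simp add: sm_def algebra_simps)
qed

lemma sm_cong: "(\<And>r. r \<le> k \<Longrightarrow> f r = f' r) \<Longrightarrow> (\<And>r. r \<le> k \<Longrightarrow> g r = g' r) \<Longrightarrow> sm f g k = sm f' g' k"
  unfolding sm_def by (intro sum.cong) auto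

lemma even_choose_pow2: assumes "0 < r" "r < 2^n" shows "even (2^n choose r)"
proof (rule ccontr)
  assume o: "odd (2^n choose r)"
  obtain m where m: "2^n = Suc m" by (metis not0_implies_Suc power_not_zero zero_neq_numeral)
  obtain s where s: "r = Suc s" using assms(1) by (metis gr0_implies_Suc)
  have "Suc m * (m choose s) = (Suc m choose Suc s) * Suc s" by (rule Suc_times_binomial_eq)
  then have "(2::nat)^n dvd (2^n choose r) * r" using m s by (metis dvd_triv_left)
  moreover have "coprime ((2::nat)^n) (2^n choose r)" using o by (simp add: coprime_left_2_iff_odd)
  ultimately have "(2::nat)^n dvd r" by (simp add: coprime_dvd_mult_right_iff)
  then show False using assms by (simp add: nat_dvd_not_less)
qed

lemma of_nat_even_c2: assumes c2: "(2::'a::field) = 0" and "even m" shows "(of_nat m :: 'a) = 0"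
proof -
  obtain q where "m = 2 * q" using assms(2) by blast
  then show ?thesis using c2 by simp
qed

definition dp1 :: "nat \<Rightarrow> 'a::field" where "dp1 = (\<lambda>k. if k = 0 then 1 else 0)"

lemma dpm_sm: "dp_mult n f g k = (if k < 2^n then sm f g k else 0)"
  unfolding dp_mult_def sm_def by simp

lemma dpm_in [simp]: "dp_mult n f g \<in> dpO n"
  unfolding dpO_def dp_mult_def by simp
lemma dpd_in [simp]: "dp_deriv n f \<in> dpO n"
  unfolding dpO_def dp_deriv_def by simp
lemma dpO_add [simp]: "f \<in> dpO n \<Longrightarrow> g \<in> dpO n \<Longrightarrow> (\<lambda>k. f k + g k) \<in> dpO n"
  unfolding dpO_def by simp
lemma dpO_diff [simp]: "f \<in> dpO n \<Longrightarrow> g \<in> dpO n \<Longrightarrow> (\<lambda>k. f k - g k) \<in> dpO n"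
  unfolding dpO_def by simp
lemma dpO_smult [simp]: "f \<in> dpO n \<Longrightarrow> (\<lambda>k. c * f k) \<in> dpO n"
  unfolding dpO_def by simp
lemma dpO_zero [simp]: "(\<lambda>_. 0) \<in> dpO n"
  unfolding dpO_def by simp
lemma dp1_in [simp]: "dp1 \<in> dpO n"
  unfolding dpO_def dp1_def by auto
lemma dpx_in [simp]: "n \<ge> 1 \<Longrightarrow> dp_x \<in> dpO n"
  unfolding dpO_def dp_x_def
proof (intro CollectI allI impI)
  fix r :: nat assume "n \<ge> 1" "2^n \<le> r"
  moreover have "(2::nat) \<le> 2^n" using \<open>n \<ge> 1\<close> by (metis power_increasing power_one_right zero_less_numeral one_le_numeral)
  ultimately show "(if r = 1 then 1 else 0) = 0" by auto
qed

lemma dpm_comm: "dp_mult n f g = dp_mult n g f"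
  by (rule ext) (simp add: dpm_sm sm_comm)

lemma dpm_assoc: "dp_mult n (dp_mult n f g) h = dp_mult n f (dp_mult n g h)"
proof (rule ext)
  fix k
  show "dp_mult n (dp_mult n f g) h k = dp_mult n f (dp_mult n g h) k"
  proof (cases "k < 2^n")
    case True
    have "sm (dp_mult n f g) h k = sm (sm f g) h k"
      by (rule sm_cong) (use True in \<open>auto simp: dpm_sm\<close>)
    moreover have "sm f (dp_mult n g h) k = sm f (sm g h) k"
      by (rule sm_cong) (use True in \<open>auto simp: dpm_sm\<close>)
    ultimately show ?thesis using True by (simp add: dpm_sm sm_assoc_aux)
  qed (simp add: dpm_sm)
qed

lemma dpm_lcomm: "dp_mult n f (dp_mult n g h) = dp_mult n g (dp_mult n f h)"
  by (metis dpm_assoc dpm_comm)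

lemma dpm_add1: "dp_mult n (\<lambda>k. a k + b k) c = (\<lambda>k. dp_mult n a c k + dp_mult n b c k)"
  unfolding dp_mult_def by (auto simp: sum.distrib algebra_simps)
lemma dpm_add2: "dp_mult n c (\<lambda>k. a k + b k) = (\<lambda>k. dp_mult n c a k + dp_mult n c b k)"
  unfolding dp_mult_def by (auto simp: sum.distrib algebra_simps)
lemma dpm_smult1: "dp_mult n (\<lambda>k. e * a k) c = (\<lambda>k. e * dp_mult n a c k)"
  unfolding dp_mult_def by (auto simp: sum_distrib_left algebra_simps)
lemma dpm_smult2: "dp_mult n c (\<lambda>k. e * a k) = (\<lambda>k. e * dp_mult n c a k)"
  unfolding dp_mult_def by (auto simp: sum_distrib_left algebra_simps)
lemma dpm_zero1: "dp_mult n (\<lambda>k. 0) c = (\<lambda>k. 0)"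
  unfolding dp_mult_def by auto
lemma dpm_zero2: "dp_mult n c (\<lambda>k. 0) = (\<lambda>k. 0)"
  unfolding dp_mult_def by auto
lemma dpd_add: "dp_deriv n (\<lambda>k. a k + b k) = (\<lambda>k. dp_deriv n a k + dp_deriv n b k)"
  unfolding dp_deriv_def by auto
lemma dpd_smult: "dp_deriv n (\<lambda>k. e * a k) = (\<lambda>k. e * dp_deriv n a k)"
  unfolding dp_deriv_def by auto
lemma dpd_zero: "dp_deriv n (\<lambda>k. 0) = (\<lambda>k. 0)"
  unfolding dp_deriv_def by auto

lemma dpm_one: "f \<in> dpO n \<Longrightarrow> dp_mult n dp1 f = f"
proof (rule ext)
  fix k assume f: "f \<in> dpO n"
  have "sm dp1 f k = f k"
    unfolding sm_def dp1_def by (simp add: sum.atMost_shift del: sum.atMost_Suc)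
  then show "dp_mult n dp1 f k = f k" using f by (auto simp: dpm_sm dpO_def)
qed

lemma dpd_one [simp]: "dp_deriv n dp1 = (\<lambda>k. 0)"
  unfolding dp_deriv_def dp1_def by auto

lemma dpd_x: "n \<ge> 1 \<Longrightarrow> dp_deriv n dp_x = dp1"
proof (rule ext)
  fix k assume "n \<ge> 1"
  moreover have "(2::nat) \<le> 2^n" using \<open>n \<ge> 1\<close> by (metis power_increasing power_one_right zero_less_numeral one_le_numeral)
  ultimately show "dp_deriv n dp_x k = dp1 k" unfolding dp_deriv_def dp_x_def dp1_def by auto
qed

lemma leibniz: assumes c2: "(2::'a::field) = 0"
  shows "dp_deriv n (dp_mult n a b) = (\<lambda>k. dp_mult n (dp_deriv n a) b k + dp_mult n a (dp_deriv n (b::nat\<Rightarrow>'a)) k)"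
proof (rule ext)
  fix k
  define a' where "a' r = (if r < 2^n then a r else 0)" for r
  define b' where "b' r = (if r < 2^n then b r else 0)" for r
  show "dp_deriv n (dp_mult n a b) k = dp_mult n (dp_deriv n a) b k + dp_mult n a (dp_deriv n b) k"
  proof (cases "k < 2^n")
    case False then show ?thesis by (simp add: dp_deriv_def dpm_sm)
  next
    case True
    have "sm (dp_deriv n a) b k = sm (\<lambda>r. a' (Suc r)) b' k"
      by (rule sm_cong) (use True in \<open>auto simp: dp_deriv_def a'_def b'_def\<close>)
    moreover have "sm a (dp_deriv n b) k = sm a' (\<lambda>r. b' (Suc r)) k"
      by (rule sm_cong) (use True in \<open>auto simp: dp_deriv_def a'_def b'_def\<close>)
    ultimately have R: "dp_mult n (dp_deriv n a) b k + dp_mult n a (dp_deriv n b) k = sm a' b' (Suc k)"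
      using True by (simp add: dpm_sm sm_Suc)
    show ?thesis
    proof (cases "Suc k < 2^n")
      case True
      have "sm a' b' (Suc k) = sm a b (Suc k)"
        by (rule sm_cong) (use True in \<open>auto simp: a'_def b'_def\<close>)
      then show ?thesis using R True by (simp add: dp_deriv_def dpm_sm)
    next
      case F: False
      with True have N: "Suc k = 2^n" by simp
      have "sm a' b' (Suc k) = 0"
        unfolding sm_def
      proof (rule sum.neutral, intro ballI)
        fix r assume "r \<in> {..Suc k}"
        then have r: "r \<le> 2^n" using N by simp
        show "of_nat (Suc k choose r) * a' r * b' (Suc k - r) = 0"
        proof (cases "r = 0 \<or> r = 2^n")
          case True then show ?thesis using N by (auto simp: a'_def b'_def)
        next
          case False
          then have "even (2^n choose r)" using r by (intro even_choose_pow2) auto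
          then have "(of_nat (Suc k choose r) :: 'a) = 0" using N c2 by (simp add: of_nat_even_c2)
          then show ?thesis by simp
        qed
      qed
      then show ?thesis using R F by (simp add: dp_deriv_def)
    qed
  qed
qed

lemma dp_square: assumes c2: "(2::'a::field) = 0"
  shows "dp_mult n a a = (\<lambda>k. a 0 * a 0 * (dp1 k::'a))"
proof (rule ext)
  fix k
  show "dp_mult n a a k = a 0 * a 0 * dp1 k"
  proof (cases "k = 0")
    case True then show ?thesis by (simp add: dpm_sm sm_def dp1_def)
  next
    case False
    then obtain j where j: "k = Suc j" by (metis not0_implies_Suc)
    show ?thesis
    proof (cases "k < 2^n")
      case True
      have "dp_deriv n (dp_mult n a a) j = dp_mult n a a k" using True j by (simp add: dp_deriv_def)
      also have "dp_deriv n (dp_mult n a a) j = 0"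
        using c2 by (simp add: leibniz[OF c2] dpm_comm[of n "dp_deriv n a"] flip: mult_2)
      finally show ?thesis using j by (simp add: dp1_def)
    qed (use j in \<open>simp add: dpm_sm dp1_def\<close>)
  qed
qed

context
  fixes n :: nat
  assumes c2: "(2::'a::field) = 0"
begin

lemma c2_add_self: "(x::'a) + x = 0"
  using c2 by (metis mult_2 mult_zero_left)
lemma c2_add_self2: "(x::'a) + (x + y) = y"
  by (simp add: add.assoc[symmetric] c2_add_self)
lemma c2_minus: "(x::'a) - y = x + y"
proof -
  have "-y = y" using c2_add_self[of y] by (simp add: add_eq_0_iff)
  then show ?thesis by (metis diff_conv_add_uminus)
qed

lemma vbr_c2: "vbr n f g = (\<lambda>k. dp_mult n f (dp_deriv n g) k + dp_mult n g (dp_deriv n (f::nat\<Rightarrow>'a)) k)"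
  unfolding vbr_def by (simp add: c2_minus)

lemmas alg = dpm_add1 dpm_add2 dpm_smult1 dpm_smult2 dpm_zero1 dpm_zero2 dpd_add dpd_smult dpd_zero
  leibniz[OF c2] dpm_assoc dpm_comm dpm_lcomm c2_add_self c2_add_self2 add.assoc add.commute add.left_commute

lemma jacobi: "vbr n f (vbr n g h) = (\<lambda>k. vbr n (vbr n f g) h k + vbr n g (vbr n f (h::nat\<Rightarrow>'a)) k)"
  by (rule ext) (simp add: vbr_c2 alg)


lemma vbr_in [simp]: "vbr n f g \<in> dpO n"
  unfolding vbr_def by simp

lemma vect1_dpO: "X \<in> vect1 n \<Longrightarrow> X \<in> dpO n"
  unfolding vect1_def
  by (induction rule: lin_span.induct) (auto simp: vect_def)

lemma vect1_zero [simp]: "(\<lambda>_. 0) \<in> vect1 n"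
  unfolding vect1_def by (rule lin_span.zero)
lemma vect1_add [simp]: "X \<in> vect1 n \<Longrightarrow> Y \<in> vect1 n \<Longrightarrow> (\<lambda>k. X k + Y k) \<in> vect1 n"
  unfolding vect1_def by (rule lin_span.add)
lemma vect1_smult [simp]: "X \<in> vect1 n \<Longrightarrow> (\<lambda>k. c * X k) \<in> vect1 n"
  unfolding vect1_def by (rule lin_span.smult)
lemma vect1_vbr [simp]: "h \<in> dpO n \<Longrightarrow> Y \<in> dpO n \<Longrightarrow> vbr n h Y \<in> vect1 n"
  unfolding vect1_def vect_def by (rule lin_span.base) blast
lemma vect1_vbr' [simp]: "h \<in> dpO n \<Longrightarrow> Y \<in> vect1 n \<Longrightarrow> vbr n h Y \<in> vect1 n"
  by (simp add: vect1_dpO)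
lemma vbr_dp1: "Y \<in> dpO n \<Longrightarrow> vbr n dp1 Y = dp_deriv n Y"
  unfolding vbr_def by (simp add: dpm_one dpm_zero2)
lemma vect1_deriv [simp]: "Y \<in> dpO n \<Longrightarrow> dp_deriv n Y \<in> vect1 n"
  by (metis vbr_dp1 vect1_vbr dp1_in)
lemma vect1_deriv' [simp]: "Y \<in> vect1 n \<Longrightarrow> dp_deriv n Y \<in> vect1 n"
  by (simp add: vect1_dpO)
lemma vect1_diff [simp]: "X \<in> vect1 n \<Longrightarrow> Y \<in> vect1 n \<Longrightarrow> (\<lambda>k. X k - Y k) \<in> vect1 n"
proof -
  assume a: "X \<in> vect1 n" "Y \<in> vect1 n"
  have "(\<lambda>k. X k + (-1) * Y k) \<in> vect1 n" by (rule vect1_add[OF a(1) vect1_smult[OF a(2)]])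
  moreover have "(\<lambda>k. X k + (-1) * Y k) = (\<lambda>k. X k - Y k)" by simp
  ultimately show ?thesis by simp
qed

lemma vbr_zero2 [simp]: "vbr n h (\<lambda>_. 0) = (\<lambda>_. 0)"
  unfolding vbr_def by (simp add: dpm_zero1 dpm_zero2 dpd_zero)
lemma vbr_zero1 [simp]: "vbr n (\<lambda>_. 0) h = (\<lambda>_. 0)"
  unfolding vbr_def by (simp add: dpm_zero1 dpm_zero2 dpd_zero)


definition Phi :: "(nat \<Rightarrow> 'a) \<Rightarrow> 'a \<Rightarrow> 'a endo" where
  "Phi h c = (\<lambda>Y. if Y \<in> vect1 n then (\<lambda>k. vbr n h Y k + c * dp_deriv n (dp_deriv n Y) k) else (\<lambda>_. 0))"

definition BB :: "'a endo set" where
  "BB = {Phi h c | h c. h \<in> dpO n}"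

lemma Phi_in_vect1 [simp]: "h \<in> dpO n \<Longrightarrow> Phi h c X \<in> vect1 n"
  unfolding Phi_def by auto

lemma Phi_Der: assumes h: "h \<in> dpO n" shows "Phi h c \<in> Der n"
  unfolding Der_def
proof (intro CollectI conjI ballI allI impI)
  fix X Y :: "nat \<Rightarrow> 'a" assume X: "X \<in> vect1 n" and Y: "Y \<in> vect1 n"
  show "Phi h c (\<lambda>k. X k + Y k) = (\<lambda>k. Phi h c X k + Phi h c Y k)"
    using X Y unfolding Phi_def by (auto simp: vbr_c2 alg ring_distribs)
  show "Phi h c (vbr n X Y) = (\<lambda>k. vbr n (Phi h c X) Y k + vbr n X (Phi h c Y) k)"
  proof -
    have m: "vbr n X Y \<in> vect1 n" using X Y by (simp add: vect1_dpO)
    show ?thesis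
      using X Y h vect1_dpO[OF X] vect1_dpO[OF Y] m unfolding Phi_def
      apply simp
      apply (rule ext)
      apply (simp add: vbr_c2 alg ring_distribs)
      done
  qed
next
  fix X :: "nat \<Rightarrow> 'a" and c' assume X: "X \<in> vect1 n"
  show "Phi h c (\<lambda>k. c' * X k) = (\<lambda>k. c' * Phi h c X k)"
    using X unfolding Phi_def by (auto simp: vbr_c2 alg ring_distribs mult_ac)
qed (use h in \<open>auto simp: Phi_def\<close>)


lemma Phi_in: "X \<in> vect1 n \<Longrightarrow> Phi h c X = (\<lambda>k. vbr n h X k + c * dp_deriv n (dp_deriv n X) k)"
  unfolding Phi_def by simp
lemma Phi_out: "X \<notin> vect1 n \<Longrightarrow> Phi h c X = (\<lambda>_. 0)"
  unfolding Phi_def by simp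
lemma Phi_0arg [simp]: "Phi h c (\<lambda>_. 0) = (\<lambda>_. 0)"
  unfolding Phi_def by (simp add: dpd_zero)

lemma Phi_br: assumes "h1 \<in> dpO n" "h2 \<in> dpO n"
  shows "endo_br (Phi h1 a) (Phi h2 b) = Phi (\<lambda>k. vbr n h1 h2 k + a * dp_deriv n (dp_deriv n h2) k + b * dp_deriv n (dp_deriv n h1) k) 0"
proof (rule ext)
  fix X :: "nat \<Rightarrow> 'a"
  show "endo_br (Phi h1 a) (Phi h2 b) X = Phi (\<lambda>k. vbr n h1 h2 k + a * dp_deriv n (dp_deriv n h2) k + b * dp_deriv n (dp_deriv n h1) k) 0 X"
  proof (cases "X \<in> vect1 n")
    case True
    then show ?thesis using assms vect1_dpO[OF True]
      unfolding endo_br_def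
      apply (simp add: Phi_in)
      apply (rule ext)
      apply (simp add: vbr_c2 alg ring_distribs c2_minus c2)
      done
  next
    case False
    then show ?thesis unfolding endo_br_def by (simp add: Phi_out)
  qed
qed

lemma BB_lie: "lie_subalg BB"
  unfolding lie_subalg_def
proof (intro conjI ballI allI)
  show "endo_zero \<in> BB"
  proof -
    have "endo_zero = Phi (\<lambda>_. 0) 0"
      by (rule ext) (auto simp: endo_zero_def Phi_def)
    then show ?thesis unfolding BB_def by auto
  qed
next
  fix D E assume "D \<in> BB" "E \<in> BB"
  then obtain h1 a h2 b where D: "D = Phi h1 a" "h1 \<in> dpO n" and E: "E = Phi h2 b" "h2 \<in> dpO n"
    unfolding BB_def by auto
  have "(\<lambda>X k. D X k + E X k) = Phi (\<lambda>k. h1 k + h2 k) (a + b)"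
    unfolding D E
    apply (rule ext)
    subgoal for X
      by (cases "X \<in> vect1 n") (auto simp: Phi_in Phi_out vbr_c2 alg ring_distribs)
    done
  then show "(\<lambda>X k. D X k + E X k) \<in> BB" unfolding BB_def using D E by auto
  show "endo_br D E \<in> BB" unfolding BB_def D E using D E by (auto simp: Phi_br)
next
  fix D c assume "D \<in> BB"
  then obtain h1 a where D: "D = Phi h1 a" "h1 \<in> dpO n"
    unfolding BB_def by auto
  have "(\<lambda>X k. c * D X k) = Phi (\<lambda>k. c * h1 k) (c * a)"
    unfolding D
    apply (rule ext)
    subgoal for X
      by (cases "X \<in> vect1 n") (auto simp: Phi_in Phi_out vbr_c2 alg ring_distribs mult_ac)
    done
  then show "(\<lambda>X k. c * D X k) \<in> BB" unfolding BB_def using D by auto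
qed

lemma ad_BB: "X \<in> vect1 n \<Longrightarrow> ad_g n X = Phi X 0"
  by (rule ext) (auto simp: ad_g_def Phi_def)

lemma dp_square': "dp_mult n (a::nat\<Rightarrow>'a) (dp_mult n a t) = (\<lambda>k. a 0 * a 0 * dp_mult n dp1 t k)"
  by (subst dpm_assoc[symmetric], subst dp_square[OF c2], rule dpm_smult1)



lemma dpm_one_d [simp]: "dp_mult n dp1 (dp_deriv n t) = dp_deriv n (t::nat\<Rightarrow>'a)"
  by (simp add: dpm_one)

lemma sq_BB: assumes y: "y \<in> vect1 n"
  shows "endo_comp (ad_g n y) (ad_g n y) = Phi (dp_mult n y (dp_deriv n y)) (y 0 * y 0)"
proof (rule ext)
  fix X :: "nat \<Rightarrow> 'a"
  show "endo_comp (ad_g n y) (ad_g n y) X = Phi (dp_mult n y (dp_deriv n y)) (y 0 * y 0) X"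
  proof (cases "X \<in> vect1 n")
    case True
    have yd: "y \<in> dpO n" by (rule vect1_dpO[OF y])
    show ?thesis using True yd unfolding endo_comp_def ad_BB[OF y]
      apply (simp add: Phi_in)
      apply (rule ext)
      apply (simp add: vbr_c2 alg ring_distribs dp_square' dp_square[OF c2] c2)
      done
  next
    case False
    then show ?thesis by (simp add: endo_comp_def ad_g_def Phi_out)
  qed
qed


lemma of_nat_odd_c2: assumes "odd m" shows "(of_nat m :: 'a) = 1"
proof -
  obtain q where "m = Suc (2 * q)" using assms by (metis oddE Suc_eq_plus1)
  then show ?thesis using c2 by simp
qed

definition ev :: "(nat \<Rightarrow> 'a) \<Rightarrow> bool" where "ev g \<longleftrightarrow> (\<forall>k. odd k \<longrightarrow> g k = 0)"
definition od :: "(nat \<Rightarrow> 'a) \<Rightarrow> bool" where "od g \<longleftrightarrow> (\<forall>k. even k \<longrightarrow> g k = 0)"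

lemma sm_x: "sm dp_x g k = of_nat k * (g (k - 1) :: 'a)"
proof (cases k)
  case 0 then show ?thesis by (simp add: sm_def dp_x_def)
next
  case (Suc j)
  have "sm dp_x g k = (\<Sum>r\<le>k. if r = 1 then of_nat (k choose 1) * g (k - 1) else 0)"
    unfolding sm_def dp_x_def by (intro sum.cong) auto
  also have "\<dots> = of_nat k * g (k - 1)" using Suc by simp
  finally show ?thesis .
qed

lemma x_od: assumes "od g" shows "dp_mult n dp_x g = (\<lambda>_. (0::'a))"
proof (rule ext)
  fix k
  show "dp_mult n dp_x g k = 0"
  proof (cases "even k")
    case True then show ?thesis by (simp add: dpm_sm sm_x of_nat_even_c2[OF c2])
  next
    case False
    then have "even (k - 1)" by simp
    then show ?thesis using assms by (simp add: dpm_sm sm_x od_def)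
  qed
qed

lemma ev_mult: assumes "ev a" "ev b" shows "ev (dp_mult n a b)"
  unfolding ev_def
proof (intro allI impI)
  fix k :: nat assume k: "odd k"
  have "sm a b k = 0" unfolding sm_def
  proof (rule sum.neutral, intro ballI)
    fix r assume "r \<in> {..k}"
    then have "odd r \<or> odd (k - r)" using k by auto
    then show "of_nat (k choose r) * a r * b (k - r) = 0"
    proof
      assume "odd r" then have "a r = 0" using assms(1) by (simp add: ev_def) then show ?thesis by simp
    next
      assume "odd (k - r)" then have "b (k - r) = 0" using assms(2) by (simp add: ev_def) then show ?thesis by simp
    qed
  qed
  then show "dp_mult n a b k = 0" by (simp add: dpm_sm)
qed

lemma od_mult: assumes "ev a" "od b" shows "od (dp_mult n a b)"
  unfolding od_def
proof (intro allI impI)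
  fix k :: nat assume k: "even k"
  have "sm a b k = 0" unfolding sm_def
  proof (rule sum.neutral, intro ballI)
    fix r assume "r \<in> {..k}"
    then have "odd r \<or> even (k - r)" using k by auto
    then show "of_nat (k choose r) * a r * b (k - r) = 0"
    proof
      assume "odd r" then have "a r = 0" using assms(1) by (simp add: ev_def) then show ?thesis by simp
    next
      assume "even (k - r)" then have "b (k - r) = 0" using assms(2) by (simp add: od_def) then show ?thesis by simp
    qed
  qed
  then show "dp_mult n a b k = 0" by (simp add: dpm_sm)
qed

lemma ev_d: "ev a \<Longrightarrow> od (dp_deriv n a)"
  unfolding ev_def od_def dp_deriv_def by auto
lemma od_d: "od a \<Longrightarrow> ev (dp_deriv n a)"
  unfolding ev_def od_def dp_deriv_def by auto

lemma d_eq_xdd: assumes "ev u" shows "dp_deriv n u = dp_mult n dp_x (dp_deriv n (dp_deriv n (u::nat\<Rightarrow>'a)))"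
proof (rule ext)
  fix k
  show "dp_deriv n u k = dp_mult n dp_x (dp_deriv n (dp_deriv n u)) k"
  proof (cases "k = 0")
    case True then show ?thesis using assms by (simp add: dp_deriv_def dpm_sm sm_x ev_def)
  next
    case False
    show ?thesis
    proof (cases "odd k")
      case True
      then show ?thesis using False by (auto simp: dp_deriv_def dpm_sm sm_x of_nat_odd_c2)
    next
      case F: False
      then have "odd (k+1)" by simp
      then show ?thesis using assms F by (auto simp: dp_deriv_def dpm_sm sm_x ev_def of_nat_even_c2[OF c2])
    qed
  qed
qed


lemma sq_vbr: "vbr n y (vbr n y X) = (\<lambda>k. vbr n (dp_mult n y (dp_deriv n y)) X k + y 0 * y 0 * dp_deriv n (dp_deriv n (X::nat\<Rightarrow>'a)) k)"
  by (rule ext) (simp add: vbr_c2 alg ring_distribs dp_square' dp_square[OF c2] c2)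

lemma vbr_add2: "vbr n h (\<lambda>k. X k + Y k) = (\<lambda>k. vbr n h X k + vbr n h (Y::nat\<Rightarrow>'a) k)"
  by (rule ext) (simp add: vbr_c2 alg)
lemma vbr_add1: "vbr n (\<lambda>k. X k + Y k) h = (\<lambda>k. vbr n X h k + vbr n (Y::nat\<Rightarrow>'a) h k)"
  by (rule ext) (simp add: vbr_c2 alg)

lemma Phi_add: "(\<lambda>X k. Phi h1 a X k + Phi h2 b X k) = Phi (\<lambda>k. h1 k + h2 k) (a + b)"
  apply (rule ext)
  subgoal for X
    by (cases "X \<in> vect1 n") (auto simp: Phi_in Phi_out vbr_c2 alg ring_distribs)
  done
lemma Phi_smult: "(\<lambda>X k. c * Phi h1 a X k) = Phi (\<lambda>k. c * h1 k) (c * a)"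
  apply (rule ext)
  subgoal for X
    by (cases "X \<in> vect1 n") (auto simp: Phi_in Phi_out vbr_c2 alg ring_distribs mult_ac)
  done


context
  fixes u :: "nat \<Rightarrow> 'a"
  assumes n1: "n \<ge> 1" and uO: "u \<in> dpO n" and u0: "u 0 = 0" and uev: "ev u"
begin

lemma ffd: "dp_mult n (D_u n u) (dp_deriv n (D_u n u)) = D_u n u"
proof -
  define x :: "nat \<Rightarrow> 'a" where "x = dp_x"
  define A where "A = dp_deriv n u"
  define q where "q = dp_deriv n A"
  define p where "p = dp_mult n u q"
  define dp where "dp = dp_deriv n p"
  have f: "D_u n u = (\<lambda>k. u k + x k + dp_mult n x p k)"
    unfolding D_u_def x_def p_def q_def A_def ..
  have xO: "x \<in> dpO n" using n1 by (simp add: x_def)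
  have pO: "p \<in> dpO n" by (simp add: p_def)
  have df: "dp_deriv n (D_u n u) = (\<lambda>k. A k + dp1 k + p k + dp_mult n x dp k)"
    unfolding f by (simp add: dpd_add leibniz[OF c2] x_def dpd_x[OF n1] dpm_one pO dp_def A_def add.assoc)
  have evq: "ev q" unfolding q_def A_def by (rule od_d[OF ev_d[OF uev]])
  have evp: "ev p" unfolding p_def by (rule ev_mult[OF uev evq])
  have odA: "od A" unfolding A_def by (rule ev_d[OF uev])
  have oddp: "od dp" unfolding dp_def by (rule ev_d[OF evp])
  have x0: "x 0 = 0" by (simp add: x_def dp_x_def)
  have p0: "p 0 = 0" by (simp add: p_def dpm_sm sm_def u0)
  have xx: "dp_mult n x x = (\<lambda>_. 0)" by (simp add: dp_square[OF c2] x0)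
  have uu: "dp_mult n u u = (\<lambda>_. 0)" by (simp add: dp_square[OF c2] u0)
  have pp: "dp_mult n p p = (\<lambda>_. 0)" by (simp add: dp_square[OF c2] p0)
  have Axq: "A = dp_mult n x q"
    unfolding q_def A_def x_def by (rule d_eq_xdd[OF uev])
  have t1: "dp_mult n u A = dp_mult n x p"
    unfolding Axq p_def by (rule dpm_lcomm)
  have t2: "dp_mult n u dp1 = u" using uO by (simp add: dpm_comm[of n u] dpm_one)
  have t3: "dp_mult n u p = (\<lambda>_. 0)" unfolding p_def by (simp add: dpm_assoc[symmetric] uu dpm_zero1)
  have t4: "dp_mult n u (dp_mult n x dp) = (\<lambda>_. 0)"
  proof -
    have "dp_mult n u (dp_mult n x dp) = dp_mult n x (dp_mult n u dp)" by (rule dpm_lcomm)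
    also have "\<dots> = (\<lambda>_. 0)" unfolding x_def by (rule x_od[OF od_mult[OF uev oddp]])
    finally show ?thesis .
  qed
  have t5: "dp_mult n x A = (\<lambda>_. 0)" by (simp add: x_def x_od[OF odA])
  have t6: "dp_mult n x dp1 = x" using xO by (simp add: dpm_comm[of n x] dpm_one)
  have t8: "dp_mult n x (dp_mult n x dp) = (\<lambda>_. 0)" by (simp add: dpm_assoc[symmetric] xx dpm_zero1)
  have t9: "dp_mult n (dp_mult n x p) A = (\<lambda>_. 0)"
    by (simp add: dpm_assoc x_def x_od[OF od_mult[OF evp odA]])
  have t10: "dp_mult n (dp_mult n x p) dp1 = dp_mult n x p" by (simp add: dpm_comm[of n _ dp1] dpm_one)
  have t11: "dp_mult n (dp_mult n x p) p = (\<lambda>_. 0)" by (simp add: dpm_assoc pp dpm_zero2)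
  have t12: "dp_mult n (dp_mult n x p) (dp_mult n x dp) = (\<lambda>_. 0)"
    by (simp add: dpm_assoc dpm_lcomm[of n p x] dpm_assoc[symmetric, of n x x] xx dpm_zero1 dpm_zero2)
  show ?thesis
    unfolding df
    unfolding f
    apply (simp only: dpm_add1 dpm_add2 t1 t2 t3 t4 t5 t6 t8 t9 t10 t11 t12)
    apply (rule ext)
    apply (simp add: c2_add_self c2_add_self2 add_ac)
    done
qed


definition fD where "fD = D_u n u"

lemma fO: "fD \<in> dpO n"
  unfolding fD_def D_u_def using uO n1 by simp

lemma f0: "fD 0 = 0"
  unfolding fD_def D_u_def using u0 by (simp add: dp_x_def dpm_sm sm_def)

lemma f1: "fD 1 = 1"
proof -
  have "(2::nat)^1 \<le> 2^n" by (rule power_increasing[OF n1]) simp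
  then have N: "(1::nat) < 2^n" by simp
  have "u 1 = 0" using uev by (simp add: ev_def)
  moreover have "dp_mult n dp_x (dp_mult n u (dp_deriv n (dp_deriv n u))) 1 = 0"
    using N u0 by (simp add: dpm_sm sm_x sm_def dp_x_def)
  ultimately show ?thesis unfolding fD_def D_u_def by (simp add: dp_x_def)
qed


lemma U_idem: "X \<in> vect1 n \<Longrightarrow> vbr n fD (vbr n fD X) = vbr n fD X"
  unfolding fD_def using f0 unfolding fD_def by (simp add: sq_vbr ffd)

lemma gr_odd_fD: "gr_odd n u = {vbr n fD X | X. X \<in> vect1 n}"
  unfolding gr_odd_def fD_def ..
lemma gr_even_fD: "gr_even n u = {X \<in> vect1 n. vbr n fD X = (\<lambda>_. 0)}"
  unfolding gr_even_def fD_def ..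

lemma commute:
  assumes h: "h \<in> dpO n"
    and pe: "\<forall>X\<in>gr_even n u. Phi h 0 X \<in> gr_even n u"
    and po: "\<forall>X\<in>gr_odd n u. Phi h 0 X \<in> gr_odd n u"
    and X: "X \<in> vect1 n"
  shows "vbr n fD (vbr n h X) = vbr n h (vbr n fD X)"
proof -
  define UX where "UX = vbr n fD X"
  define E where "E = (\<lambda>k. X k + UX k)"
  have UXv: "UX \<in> vect1 n" unfolding UX_def using X fO by simp
  have Ev: "E \<in> vect1 n" unfolding E_def using X UXv by simp
  have "vbr n fD E = (\<lambda>_. 0)"
    unfolding E_def vbr_add2 using U_idem[OF X] by (simp add: UX_def c2_add_self)
  then have "E \<in> gr_even n u" using Ev by (simp add: gr_even_fD)
  then have "Phi h 0 E \<in> gr_even n u" using pe by blast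
  then have 1: "vbr n fD (vbr n h E) = (\<lambda>_. 0)" using Ev by (simp add: gr_even_fD Phi_in)
  have "UX \<in> gr_odd n u" unfolding gr_odd_fD UX_def using X by blast
  then have "Phi h 0 UX \<in> gr_odd n u" using po by blast
  then obtain Z where Z: "Z \<in> vect1 n" "vbr n h UX = vbr n fD Z" using UXv by (auto simp: gr_odd_fD Phi_in)
  have 2: "vbr n fD (vbr n h UX) = vbr n h UX" using Z U_idem[OF Z(1)] by simp
  have XE: "X = (\<lambda>k. E k + UX k)" unfolding E_def by (simp add: add.assoc c2_add_self)
  have "vbr n fD (vbr n h X) = (\<lambda>k. vbr n fD (vbr n h E) k + vbr n fD (vbr n h UX) k)"
    by (subst XE) (simp add: vbr_add2)
  also have "\<dots> = vbr n h UX" using 1 2 by simp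
  finally show ?thesis unfolding UX_def .
qed

lemma h0_zero:
  assumes n2: "n \<ge> 2" and h: "h \<in> dpO n"
    and pe: "\<forall>X\<in>gr_even n u. Phi h 0 X \<in> gr_even n u"
    and po: "\<forall>X\<in>gr_odd n u. Phi h 0 X \<in> gr_odd n u"
  shows "h 0 = 0"
proof -
  have N4: "(2::nat)^2 \<le> 2^n" by (rule power_increasing[OF n2]) simp
  define x2 :: "nat \<Rightarrow> 'a" where "x2 = (\<lambda>k. if k = 2 then 1 else 0)"
  have x2O: "x2 \<in> dpO n" unfolding x2_def dpO_def using N4 by auto
  have dx2: "dp_deriv n x2 = dp_x" unfolding x2_def dp_deriv_def dp_x_def using N4 by (auto intro!: ext)
  have xv: "(dp_x :: nat \<Rightarrow> 'a) \<in> vect1 n" using vect1_deriv[OF x2O] dx2 by simp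
  have xO: "(dp_x :: nat \<Rightarrow> 'a) \<in> dpO n" using n1 by simp
  have onev: "(dp1 :: nat \<Rightarrow> 'a) \<in> vect1 n" using vect1_deriv[OF xO] unfolding dpd_x[OF n1] .
  define w where "w = vbr n fD h"
  have wO: "w \<in> dpO n" unfolding w_def by simp
  have key: "vbr n w Y = (\<lambda>_. 0)" if Y: "Y \<in> vect1 n" for Y
  proof -
    have "vbr n fD (vbr n h Y) = (\<lambda>k. vbr n w Y k + vbr n h (vbr n fD Y) k)"
      unfolding w_def by (rule jacobi)
    then have "(\<lambda>k. vbr n w Y k + vbr n h (vbr n fD Y) k) = vbr n h (vbr n fD Y)"
      using commute[OF h pe po Y] by simp
    then show ?thesis
      by (metis (no_types, lifting) add_cancel_left_left ext)
  qed
  have "vbr n w dp1 = dp_deriv n w"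
    by (rule ext) (simp add: vbr_c2 dpm_zero2)
  then have dw: "dp_deriv n w = (\<lambda>_. 0)" using key[OF onev] by simp
  have "vbr n w dp_x = w"
    using wO by (simp add: vbr_c2 dw dpd_x[OF n1] dpm_zero2 dpm_comm[of n w] dpm_one)
  then have w0: "w = (\<lambda>_. 0)" using key[OF xv] by simp
  have N1: "(1::nat) < 2^n" using N4 by simp
  have "w 0 = h 0"
    unfolding w_def using N1 f0 f1 by (simp add: vbr_c2 dpm_sm sm_def dp_deriv_def)
  then show ?thesis using w0 by simp
qed



lemma Phi_zero_endo: "Phi (\<lambda>_. 0) 0 = endo_zero"
  by (rule ext) (auto simp: endo_zero_def Phi_def)

lemma gsq_BB: "g_sq n u \<subseteq> BB"
  unfolding g_sq_def
proof (rule Inter_lower, intro CollectI conjI ballI)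
  show "BB \<subseteq> Der n" unfolding BB_def using Phi_Der by auto
  show "lie_subalg BB" by (rule BB_lie)
next
  fix X :: "nat \<Rightarrow> 'a" assume X: "X \<in> vect1 n"
  show "ad_g n X \<in> BB" unfolding BB_def ad_BB[OF X] using vect1_dpO[OF X] by auto
next
  fix y :: "nat \<Rightarrow> 'a" assume "y \<in> gr_odd n u"
  then have y: "y \<in> vect1 n" using fO by (auto simp: gr_odd_fD)
  show "endo_comp (ad_g n y) (ad_g n y) \<in> BB" unfolding BB_def sq_BB[OF y] by auto
qed

definition Fset :: "nat \<Rightarrow> 'a endo set" where
  "Fset m = {Phi h 0 | h. h \<in> dpO n \<and> (\<forall>r\<le>m. h r = 0)}"

lemma Fset_span: assumes "S \<subseteq> Fset m" shows "endo_span S \<subseteq> Fset m"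
proof
  fix D assume "D \<in> endo_span S"
  then show "D \<in> Fset m"
  proof (induction rule: endo_span.induct)
    case zero
    then show ?case unfolding Fset_def Phi_zero_endo[symmetric] by auto
  next
    case (base D) then show ?case using assms by auto
  next
    case (add D E)
    then obtain h1 h2 where "D = Phi h1 0" "h1 \<in> dpO n" "\<forall>r\<le>m. h1 r = 0"
        "E = Phi h2 0" "h2 \<in> dpO n" "\<forall>r\<le>m. h2 r = 0" unfolding Fset_def by auto
    then show ?case unfolding Fset_def using Phi_add[of h1 0 h2 0] by fastforce
  next
    case (smult D c)
    then obtain h1 where "D = Phi h1 0" "h1 \<in> dpO n" "\<forall>r\<le>m. h1 r = 0" unfolding Fset_def by auto
    then show ?case unfolding Fset_def using Phi_smult[of c h1 0] by fastforce
  qed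
qed

lemma br_low: assumes "\<forall>r\<le>m. h1 r = 0" "\<forall>r\<le>m. h2 r = 0" "k \<le> Suc m"
  shows "vbr n h1 h2 k = (0::'a)"
proof -
  have T: "sm a (dp_deriv n b) k = (if k = 1 then a 1 * b 1 else 0)"
    if a: "\<forall>r\<le>m. a r = 0" and b: "\<forall>r\<le>m. b r = (0::'a)" and kN: "k < 2^n" for a b
  proof -
    have "sm a (dp_deriv n b) k = (\<Sum>r\<le>k. if r = 1 \<and> k = 1 then a 1 * b 1 else 0)"
      unfolding sm_def
    proof (rule sum.cong[OF refl])
      fix r assume r: "r \<in> {..k}"
      show "of_nat (k choose r) * a r * dp_deriv n b (k - r) = (if r = 1 \<and> k = 1 then a 1 * b 1 else 0)"
      proof (cases "r = 1 \<and> k = 1")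
        case True then show ?thesis using kN by (simp add: dp_deriv_def)
      next
        case False
        show ?thesis
        proof (cases "r \<le> m")
          case True then show ?thesis using a False by simp
        next
          case F2: False
          then have "k - r + 1 \<le> m" using r assms(3) False by auto
          then show ?thesis using b False by (simp add: dp_deriv_def)
        qed
      qed
    qed
    also have "\<dots> = (if k = 1 then a 1 * b 1 else 0)" by (cases "k = 1") auto
    finally show ?thesis .
  qed
  show ?thesis
  proof (cases "k < 2^n")
    case True
    then show ?thesis using T[OF assms(1,2) True] T[OF assms(2,1) True]
      by (simp add: vbr_c2 dpm_sm mult.commute c2_add_self)
  next
    case False then show ?thesis by (simp add: vbr_c2 dpm_sm)
  qed
qed

lemma Fset_br: assumes "D \<in> Fset m" "E \<in> Fset m" shows "endo_br D E \<in> Fset (Suc m)"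
proof -
  obtain h1 h2 where h: "D = Phi h1 0" "h1 \<in> dpO n" "\<forall>r\<le>m. h1 r = 0"
      "E = Phi h2 0" "h2 \<in> dpO n" "\<forall>r\<le>m. h2 r = 0" using assms unfolding Fset_def by auto
  have e: "(\<lambda>k. vbr n h1 h2 k + 0 * dp_deriv n (dp_deriv n h2) k + 0 * dp_deriv n (dp_deriv n h1) k) = vbr n h1 h2"
    by simp
  have br: "endo_br D E = Phi (vbr n h1 h2) 0"
    using Phi_br[OF h(2) h(5), of 0 0] unfolding e h(1) h(4) .
  have "\<forall>r\<le>Suc m. vbr n h1 h2 r = 0" using br_low[OF h(3) h(6)] by blast
  then show ?thesis unfolding Fset_def br using vbr_in by blast
qed

lemma gr_even_diff: "X \<in> gr_even n u \<Longrightarrow> Y \<in> gr_even n u \<Longrightarrow> (\<lambda>k. X k - Y k) \<in> gr_even n u"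
  unfolding gr_even_fD by (simp add: c2_minus vbr_add2)

lemma gr_odd_diff: assumes "X \<in> gr_odd n u" "Y \<in> gr_odd n u" shows "(\<lambda>k. X k - Y k) \<in> gr_odd n u"
proof -
  obtain Z1 Z2 where Z: "X = vbr n fD Z1" "Z1 \<in> vect1 n" "Y = vbr n fD Z2" "Z2 \<in> vect1 n"
    using assms unfolding gr_odd_fD by blast
  have "(\<lambda>k. X k - Y k) = vbr n fD (\<lambda>k. Z1 k + Z2 k)"
    unfolding Z(1,3) vbr_add2 by (simp add: c2_minus)
  moreover have "(\<lambda>k. Z1 k + Z2 k) \<in> vect1 n" using Z by simp
  ultimately show ?thesis unfolding gr_odd_fD by blast
qed

lemma first_step: assumes n2: "n \<ge> 2" shows "derived_series (S_even n u) (Suc 0) \<subseteq> Fset 0"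
proof -
  have "{endo_br D E | D E. D \<in> S_even n u \<and> E \<in> S_even n u} \<subseteq> Fset 0"
  proof clarify
    fix D E assume D: "D \<in> S_even n u" and E: "E \<in> S_even n u"
    obtain h1 a where h1: "D = Phi h1 a" "h1 \<in> dpO n" using D gsq_BB unfolding S_even_def BB_def by blast
    obtain h2 b where h2: "E = Phi h2 b" "h2 \<in> dpO n" using E gsq_BB unfolding S_even_def BB_def by blast
    define k where "k = (\<lambda>k. vbr n h1 h2 k + a * dp_deriv n (dp_deriv n h2) k + b * dp_deriv n (dp_deriv n h1) k)"
    have kO: "k \<in> dpO n" unfolding k_def by simp
    have br: "endo_br D E = Phi k 0" unfolding h1 h2 k_def by (rule Phi_br[OF h1(2) h2(2)])
    have pe: "\<forall>X\<in>gr_even n u. Phi k 0 X \<in> gr_even n u"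
      using D E unfolding br[symmetric] endo_br_def S_even_def by (auto intro!: gr_even_diff)
    have po: "\<forall>X\<in>gr_odd n u. Phi k 0 X \<in> gr_odd n u"
      using D E unfolding br[symmetric] endo_br_def S_even_def by (auto intro!: gr_odd_diff)
    have "k 0 = 0" by (rule h0_zero[OF n2 kO pe po])
    then show "endo_br D E \<in> Fset 0" unfolding br Fset_def using kO by auto
  qed
  then show ?thesis by (simp add: Fset_span)
qed

lemma all_steps: assumes n2: "n \<ge> 2" shows "derived_series (S_even n u) (Suc m) \<subseteq> Fset m"
proof (induction m)
  case 0 then show ?case using first_step[OF n2] by simp
next
  case (Suc m)
  have "{endo_br D E | D E. D \<in> derived_series (S_even n u) (Suc m) \<and> E \<in> derived_series (S_even n u) (Suc m)} \<subseteq> Fset (Suc m)"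
    using Suc Fset_br by blast
  then show ?case by (simp only: derived_series.simps Fset_span)
qed

lemma solvable_main: assumes n2: "n \<ge> 2" shows "solvable_lie (S_even n u)"
  unfolding solvable_lie_def
proof (intro exI[of _ "Suc (2^n)"] equalityI)
  show "derived_series (S_even n u) (Suc (2^n)) \<subseteq> {endo_zero}"
  proof
    fix D assume "D \<in> derived_series (S_even n u) (Suc (2^n))"
    then obtain h where h: "D = Phi h 0" "h \<in> dpO n" "\<forall>r\<le>2^n. h r = 0"
      using all_steps[OF n2] unfolding Fset_def by blast
    have "h = (\<lambda>_. 0)"
    proof (rule ext)
      fix r show "h r = 0" using h(2,3) unfolding dpO_def by (cases "r \<le> 2^n") auto
    qed
    then show "D \<in> {endo_zero}" using h(1) Phi_zero_endo by simp
  qed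
  show "{endo_zero} \<subseteq> derived_series (S_even n u) (Suc (2^n))"
    by (simp add: endo_span.zero)
qed

end


end

theorem corollary6p2p2:
  fixes u :: "nat \<Rightarrow> 'a::alg_closed_field" and n :: nat
  assumes "CHAR('a) = 2"
    and "n \<ge> 2"
    and "u \<in> dpO n"
    and "u 0 = 0"
    and "\<forall>k. odd k \<longrightarrow> u k = 0"
  shows "solvable_lie (S_even n u)"
proof -
  have c2: "(2::'a) = 0" using of_nat_CHAR[where 'a='a] assms(1) by simp
  have n1: "n \<ge> 1" using assms(2) by simp
  have uev: "ev u" using assms(5) ev_def[OF c2, of u] by simp
  show ?thesis by (rule solvable_main[OF c2 n1 assms(3) assms(4) uev assms(2)])
qed

end
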